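(* For integers $n\ge 0$ and $i\ge 0$, \[ S_n(i+2)=S_n(i)-q^{i}S_{n+1}(i)+q^{i(n+1)}(1+q^i)(q;q^2)_{n+1}, \] where $S_m(i):=\sum_{j=0}^{m} \frac{q^{ij}(q;q)_{m+j}}{(q^2;q^2)_j}$.
   Context: $(a;q)_0:=1$ and $(a;q)_n:=(1-a)(1-aq)\cdots(1-aq^{n-1})$ for $n\ge1$. *)

theory Defs
  imports Complex_Main
begin

definition qpoch :: "'a::comm_ring_1 \<Rightarrow> 'a \<Rightarrow> nat \<Rightarrow> 'a" where
  "qpoch a q n = (\<Prod>k<n. 1 - a * q ^ k)"

definition S :: "'a::field \<Rightarrow> nat \<Rightarrow> nat \<Rightarrow> 'a" where
  "S q m i = (\<Sum>j=0..m. q ^ (i * j) * qpoch q q (m + j) / qpoch (q^2) (q^2) j)"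

end

theory Submission
  imports Defs
begin

lemma qpoch_Suc: "qpoch a q (Suc n) = qpoch a q n * (1 - a * q ^ n)"
  unfolding qpoch_def by (simp add: mult.commute)

lemma qpoch_split:
  fixes q :: complex
  shows "qpoch q q (2*m) = qpoch q (q^2) m * qpoch (q^2) (q^2) m \<and>
         qpoch q q (2*m+1) = qpoch q (q^2) (m+1) * qpoch (q^2) (q^2) m"
proof (induction m)
  case 0
  then show ?case by (simp add: qpoch_def)
next
  case (Suc m)
  have e1: "qpoch q q (2*Suc m) = qpoch q q (2*m+1) * (1 - q * q^(2*m+1))"
    using qpoch_Suc[of q q "2*m+1"] by simp
  have e2: "qpoch q q (2*Suc m+1) = qpoch q q (2*Suc m) * (1 - q * q^(2*m+2))"
    using qpoch_Suc[of q q "2*Suc m"] by simp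
  have e3: "qpoch (q^2) (q^2) (Suc m) = qpoch (q^2) (q^2) m * (1 - q^2 * (q^2)^m)"
    by (rule qpoch_Suc)
  have e4: "qpoch q (q^2) (Suc m + 1) = qpoch q (q^2) (Suc m) * (1 - q * (q^2)^(Suc m))"
    using qpoch_Suc[of q "q^2" "Suc m"] by simp
  have p1: "q * q^(2*m+1) = q^2 * (q^2)^m"
  proof -
    have "q * q^(2*m+1) = q^(2*Suc m)" by simp
    also have "\<dots> = (q^2)^(Suc m)" by (rule power_mult)
    finally show ?thesis by simp
  qed
  have p2: "q * q^(2*m+2) = q * (q^2)^(Suc m)" using power_mult[of q 2 "Suc m"] by simp
  have A: "qpoch q q (2*Suc m) = qpoch q (q^2) (Suc m) * qpoch (q^2) (q^2) (Suc m)"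
    using e1 e3 Suc p1 by simp
  have B: "qpoch q q (2*Suc m+1) = qpoch q (q^2) (Suc m + 1) * qpoch (q^2) (q^2) (Suc m)"
    using e2 e4 A p2 by simp
  show ?case using A B by simp
qed

lemma D_nz:
  fixes q :: complex
  assumes "\<forall>k\<in>{1..n+1}. q ^ (2 * k) \<noteq> 1" "j \<le> n+1"
  shows "qpoch (q^2) (q^2) j \<noteq> 0"
  unfolding qpoch_def prod_zero_iff[OF finite_lessThan]
proof (intro notI, elim bexE)
  fix k assume "k \<in> {..<j}"
  then have "Suc k \<in> {1..n+1}" using assms(2) by auto
  then have "q ^ (2 * Suc k) \<noteq> 1" using assms(1) by blast
  moreover have "q^2 * (q^2)^k = q ^ (2 * Suc k)" using power_mult[of q 2 "Suc k"] by simp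
  moreover assume "1 - q\<^sup>2 * (q\<^sup>2) ^ k = 0"
  ultimately show False by simp
qed

theorem lemma3p2:
  fixes q :: complex and n i :: nat
  assumes "\<forall>k\<in>{1..n+1}. q ^ (2 * k) \<noteq> 1"
  shows "S q n (i + 2) = S q n i - q ^ i * S q (n + 1) i
           + q ^ (i * (n + 1)) * (1 + q ^ i) * qpoch q (q^2) (n + 1)"
proof -
  let ?P = "qpoch q q" and ?D = "qpoch (q^2) (q^2)"
  have diff: "S q n i - S q n (i+2) = (\<Sum>k<n. q^(i*(k+1)) * ?P (n+1+k) / ?D k)"
  proof -
    have "S q n i - S q n (i+2) = (\<Sum>j\<le>n. q^(i*j) * (1 - q^(2*j)) * ?P (n+j) / ?D j)"
      unfolding S_def atLeast0AtMost sum_subtractf[symmetric]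
    proof (rule sum.cong)
      fix j assume "j \<in> {..n}"
      have "q^((i+2)*j) = q^(i*j) * q^(2*j)" by (simp only: add_mult_distrib power_add)
      then show "q^(i*j) * ?P (n+j) / ?D j - q^((i+2)*j) * ?P (n+j) / ?D j = q^(i*j) * (1 - q^(2*j)) * ?P (n+j) / ?D j"
        by (simp add: algebra_simps diff_divide_distrib)
    qed simp
    also have "\<dots> = (\<Sum>j<n. q^(i*Suc j) * (1 - q^(2*Suc j)) * ?P (n+Suc j) / ?D (Suc j))"
    proof (cases n)
      case 0 then show ?thesis by simp
    next
      case (Suc m)
      show ?thesis unfolding Suc sum.atMost_Suc_shift lessThan_Suc_atMost by simp
    qed
    also have "\<dots> = (\<Sum>k<n. q^(i*(k+1)) * ?P (n+1+k) / ?D k)"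
    proof (rule sum.cong)
      fix k assume k: "k \<in> {..<n}"
      have dk: "?D (Suc k) = ?D k * (1 - q^(2*Suc k))"
        using qpoch_Suc[of "q^2" "q^2" k] power_mult[of q 2 "Suc k"] by simp
      have "Suc k \<in> {1..n+1}" using k by auto
      then have "q^(2*Suc k) \<noteq> 1" using assms by blast
      then have "1 - q^(2*Suc k) \<noteq> 0" by simp
      moreover have "?D k \<noteq> 0" using D_nz[OF assms, of k] k by simp
      ultimately show "q^(i*Suc k) * (1 - q^(2*Suc k)) * ?P (n+Suc k) / ?D (Suc k) = q^(i*(k+1)) * ?P (n+1+k) / ?D k"
        unfolding dk by (simp add: field_simps)
    qed simp
    finally show ?thesis .
  qed
  have S1: "S q (n+1) i = (\<Sum>k<n. q^(i*k) * ?P (n+1+k) / ?D k)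
       + q^(i*n) * ?P (2*n+1) / ?D n + q^(i*(n+1)) * ?P (2*n+2) / ?D (n+1)"
    unfolding S_def atLeast0AtMost by (simp add: lessThan_Suc_atMost[symmetric] algebra_simps) (simp add: mult_2_right)
  have dn: "?D n \<noteq> 0" "?D (n+1) \<noteq> 0" using D_nz[OF assms] by auto
  have t1: "?P (2*n+1) / ?D n = qpoch q (q^2) (n+1)" using qpoch_split[of q n] dn by simp
  have t2: "?P (2*n+2) / ?D (n+1) = qpoch q (q^2) (n+1)"
    using qpoch_split[of q "n+1"] dn by (simp add: algebra_simps)
  have "q^i * S q (n+1) i = (\<Sum>k<n. q^(i*(k+1)) * ?P (n+1+k) / ?D k)
       + q^(i*(n+1)) * qpoch q (q^2) (n+1) + q^(i*(n+2)) * qpoch q (q^2) (n+1)"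
  proof -
    have "q^i * S q (n+1) i = (\<Sum>k<n. q^i * (q^(i*k) * ?P (n+1+k) / ?D k))
       + q^i * q^(i*n) * (?P (2*n+1) / ?D n) + q^i * q^(i*(n+1)) * (?P (2*n+2) / ?D (n+1))"
      unfolding S1 by (simp add: sum_distrib_left algebra_simps)
    also have "\<dots> = (\<Sum>k<n. q^(i*(k+1)) * ?P (n+1+k) / ?D k)
       + q^(i*(n+1)) * qpoch q (q^2) (n+1) + q^(i*(n+2)) * qpoch q (q^2) (n+1)"
      unfolding t1 t2 by (simp add: power_add algebra_simps)
    finally show ?thesis .
  qed
  then show ?thesis using diff by (simp add: algebra_simps power_add)
qed

end
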